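(* Let $\phi$ be a Young function satisfying the $\Delta_2$-condition, $w$ a weight function, and let $l_{(\phi,w)}$ be the Orlicz-Lorentz sequence space, i.e. the Orlicz-Lorentz space $L_{(\phi,w)}$ over $(\mathbb{N},2^{\mathbb{N}},\nu)$ with $\nu$ the counting measure. Let $\Psi:\mathbb{N}\to\mathbb{N}$ induce the composition operator $C_\Psi f=f\circ\Psi$ on $l_{(\phi,w)}$. Then $\mathcal{A}(C_\Psi)=\infty$ if and only if there exists a sequence $(n_m)_{m\ge1}$ of distinct natural numbers such that $n_m\notin\Psi^m(\mathbb{N})$ but $n_m\in\Psi^{m-1}(\mathbb{N})$ for each $m\ge1$.
   Context: A Young function is a convex $\phi:[0,\infty)\to[0,\infty)$ with $\phi(x)=0\iff x=0$ and $\lim_{x\to\infty}\phi(x)=\infty$; $\Delta_2$-condition: $\phi(2x)\le k\phi(x)$ for some $k>0$ and all $x>0$. A weight function is a non-increasing locally integrable $w:(0,\infty)\to(0,\infty)$ with $\int_0^\infty w=\infty$. For $f:\mathbb{N}\to\mathbb{C}$, $\nu_f(s)=\#\{n:|f(n)|>s\}$, $f^*(t)=\inf\{s>0:\nu_f(s)\le t\}$; $l_{(\phi,w)}$ is the space of $f$ with $\int_0^\infty\phi(\alpha f^*(t))w(t)\,dt<\infty$ for some $\alpha>0$, with the Luxemburg norm. $\Psi^0=\mathrm{id}$. The ascent $\mathcal{A}(T)$ is the smallest integer $m$ with $\mathcal{N}(T^m)=\mathcal{N}(T^{m+1})$ ($\mathcal{N}$ = kernel), and $\infty$ if no such $m$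 exists. *)

theory Defs
  imports "HOL-Analysis.Analysis" "HOL-Library.Extended_Nat"
begin

definition young_function :: "(real \<Rightarrow> real) \<Rightarrow> bool" where
  "young_function \<phi> \<longleftrightarrow>
     convex_on {0..} \<phi> \<and> (\<forall>x\<ge>0. \<phi> x \<ge> 0) \<and>
     (\<forall>x\<ge>0. \<phi> x = 0 \<longleftrightarrow> x = 0) \<and> filterlim \<phi> at_top at_top"

definition delta2 :: "(real \<Rightarrow> real) \<Rightarrow> bool" where
  "delta2 \<phi> \<longleftrightarrow> (\<exists>k>0. \<forall>x>0. \<phi> (2 * x) \<le> k * \<phi> x)"

definition weight_function :: "(real \<Rightarrow> real) \<Rightarrow> bool" where
  "weight_function w \<longleftrightarrow>
     (\<forall>t>0. w t > 0) \<and> (\<forall>s t. 0 < s \<longrightarrow> s \<le> t \<longrightarrow> w t \<le> w s) \<and>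
     (\<forall>t>0. set_integrable lborel {0<..t} w) \<and>
     (\<integral>\<^sup>+ t\<in>{0<..}. ennreal (w t) \<partial>lborel) = \<infinity>"

definition distr_fun :: "(nat \<Rightarrow> complex) \<Rightarrow> real \<Rightarrow> ennreal" where
  "distr_fun f s = (if finite {n. norm (f n) > s} then of_nat (card {n. norm (f n) > s}) else \<infinity>)"

text \<open>Decreasing rearrangement (value infinity if the defining set is empty).\<close>
definition decr_rearr :: "(nat \<Rightarrow> complex) \<Rightarrow> real \<Rightarrow> ennreal" where
  "decr_rearr f t = Inf {ennreal s | s. s > 0 \<and> distr_fun f s \<le> ennreal t}"

definition modular :: "(real \<Rightarrow> real) \<Rightarrow> (real \<Rightarrow> real) \<Rightarrow> (nat \<Rightarrow> complex) \<Rightarrow> ennreal" where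
  "modular \<phi> w f = (\<integral>\<^sup>+ t\<in>{0<..}.
      (if decr_rearr f t = \<infinity> then \<infinity> else ennreal (\<phi> (enn2real (decr_rearr f t)) * w t)) \<partial>lborel)"

definition orlicz_lorentz_seq :: "(real \<Rightarrow> real) \<Rightarrow> (real \<Rightarrow> real) \<Rightarrow> (nat \<Rightarrow> complex) set" where
  "orlicz_lorentz_seq \<phi> w = {f. \<exists>\<alpha>>0. modular \<phi> w (\<lambda>n. of_real \<alpha> * f n) < \<infinity>}"

definition kernel_pow :: "('b \<Rightarrow> 'c::zero) set \<Rightarrow> (('b \<Rightarrow> 'c) \<Rightarrow> ('b \<Rightarrow> 'c)) \<Rightarrow> nat \<Rightarrow> ('b \<Rightarrow> 'c) set" where
  "kernel_pow S T m = {f \<in> S. (T ^^ m) f = (\<lambda>_. 0)}"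

definition ascent :: "('b \<Rightarrow> 'c::zero) set \<Rightarrow> (('b \<Rightarrow> 'c) \<Rightarrow> ('b \<Rightarrow> 'c)) \<Rightarrow> enat" where
  "ascent S T = (if \<exists>m. kernel_pow S T m = kernel_pow S T (Suc m)
                 then enat (LEAST m. kernel_pow S T m = kernel_pow S T (Suc m)) else \<infinity>)"

definition comp_op :: "(nat \<Rightarrow> nat) \<Rightarrow> (nat \<Rightarrow> complex) \<Rightarrow> (nat \<Rightarrow> complex)" where
  "comp_op \<Psi> f = f \<circ> \<Psi>"

end

theory Submission
  imports Defs
begin

lemma delta_distr:
  fixes p :: nat assumes "s > 0"
  shows "distr_fun (\<lambda>n. if n = p then 1 else 0) s = (if s < 1 then 1 else 0)"
proof -
  have "{n. norm ((\<lambda>n. if n = p then (1::complex) else 0) n) > s} = (if s < 1 then {p} else {})"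
    using assms by auto
  then show ?thesis unfolding distr_fun_def by auto
qed

lemma delta_decr:
  fixes p :: nat assumes "t > 0"
  shows "decr_rearr (\<lambda>n. if n = p then 1 else 0) t = (if t < 1 then 1 else 0)"
proof (cases "t < 1")
  case True
  have A: "{ennreal s | s. s > 0 \<and> distr_fun (\<lambda>n. if n = p then 1 else 0) s \<le> ennreal t}
       = ennreal ` {1..}"
  proof -
    have "s > 0 \<and> distr_fun (\<lambda>n. if n = p then 1 else 0) s \<le> ennreal t \<longleftrightarrow> s \<ge> 1" for s
    proof (cases "s > 0")
      case True
      then show ?thesis using delta_distr[OF True, of p] \<open>t<1\<close> assms
        by (auto simp: ennreal_le_1 ennreal_1[symmetric] simp del: ennreal_1)
    qed auto
    then show ?thesis by auto
  qed
  have "Inf (ennreal ` {1..}) = 1"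
    by (rule antisym) (auto intro!: Inf_lower2[of 1] Inf_greatest)
  then show ?thesis using A True unfolding decr_rearr_def by simp
next
  case False
  have A: "{ennreal s | s. s > 0 \<and> distr_fun (\<lambda>n. if n = p then 1 else 0) s \<le> ennreal t}
       = ennreal ` {0<..}"
  proof -
    have "s > 0 \<and> distr_fun (\<lambda>n. if n = p then 1 else 0) s \<le> ennreal t \<longleftrightarrow> s > 0" for s
    proof (cases "s > 0")
      case True
      then show ?thesis using delta_distr[OF True, of p] False
        by (auto simp: ennreal_1[symmetric] simp del: ennreal_1)
    qed auto
    then show ?thesis by auto
  qed
  have "Inf (ennreal ` {0<..}) \<le> 0 + ennreal e" if "e > 0" for e
    using that by (auto intro: Inf_lower)
  then have "Inf (ennreal ` {0<..}) \<le> 0" by (rule ennreal_le_epsilon)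
  then have "Inf (ennreal ` {0<..}) = 0" by simp
  then show ?thesis using A False unfolding decr_rearr_def by simp
qed

lemma delta_in:
  assumes yf: "young_function \<phi>" and wf: "weight_function w"
  shows "(\<lambda>n. if n = p then 1 else 0) \<in> orlicz_lorentz_seq \<phi> w"
proof -
  let ?f = "(\<lambda>n. if n = p then (1::complex) else 0)"
  have f1: "(\<lambda>n. complex_of_real 1 * ?f n) = ?f" by simp
  have phi0: "\<phi> 0 = 0" and phi1: "\<phi> 1 \<ge> 0" using yf unfolding young_function_def by auto
  have int: "set_integrable lborel {0<..1} w" using wf unfolding weight_function_def by auto
  then have I: "integrable lborel (\<lambda>x. indicator {0<..1::real} x *\<^sub>R w x)"
    unfolding set_integrable_def .
  have fin: "(\<integral>\<^sup>+ x. ennreal (norm (indicator {0<..1::real} x *\<^sub>R w x)) \<partial>lborel) < \<infinity>"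
    using I unfolding integrable_iff_bounded by blast
  have meas: "(\<lambda>x. ennreal (norm (indicator {0<..1::real} x *\<^sub>R w x))) \<in> borel_measurable lborel"
    using borel_measurable_integrable[OF I] by measurable
  have pw: "(if decr_rearr ?f t = \<infinity> then \<infinity> else ennreal (\<phi> (enn2real (decr_rearr ?f t)) * w t))
        * indicator {0<..} t
      \<le> ennreal (\<phi> 1) * ennreal (norm (indicator {0<..1::real} t *\<^sub>R w t))" for t
  proof (cases "t > 0")
    case True
    have wt: "w t > 0" using wf True unfolding weight_function_def by auto
    show ?thesis
    proof (cases "t < 1")
      case True2: True
      have d: "decr_rearr ?f t = 1" using delta_decr[OF True, of p] True2 by simp
      have "(if decr_rearr ?f t = \<infinity> then \<infinity> else ennreal (\<phi> (enn2real (decr_rearr ?f t)) * w t))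
        * indicator {0<..} t = ennreal (\<phi> 1 * w t)" using d True by simp
      also have "\<dots> = ennreal (\<phi> 1) * ennreal (w t)" using phi1 wt by (simp add: ennreal_mult)
      also have "\<dots> = ennreal (\<phi> 1) * ennreal (norm (indicator {0<..1::real} t *\<^sub>R w t))"
        using True True2 wt by simp
      finally show ?thesis by simp
    next
      case False
      have d: "decr_rearr ?f t = 0" using delta_decr[OF True, of p] False by simp
      show ?thesis using d phi0 by simp
    qed
  qed (simp add: indicator_def)
  have "modular \<phi> w ?f \<le> (\<integral>\<^sup>+ t. ennreal (\<phi> 1) * ennreal (norm (indicator {0<..1::real} t *\<^sub>R w t)) \<partial>lborel)"
    unfolding modular_def by (rule nn_integral_mono) (rule pw)
  also have "\<dots> = ennreal (\<phi> 1) * (\<integral>\<^sup>+ t. ennreal (norm (indicator {0<..1::real} t *\<^sub>R w t)) \<partial>lborel)"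
    by (rule nn_integral_cmult[OF meas])
  also have "\<dots> < \<infinity>" using fin by (simp add: ennreal_mult_less_top)
  finally have M: "modular \<phi> w ?f < \<infinity>" .
  have M1: "modular \<phi> w (\<lambda>n. complex_of_real 1 * ?f n) < \<infinity>" unfolding f1 by (rule M)
  show ?thesis unfolding orlicz_lorentz_seq_def using M1 zero_less_one[where 'a=real] by blast
qed

lemma comp_pow: "(comp_op \<Psi> ^^ m) f = f \<circ> (\<Psi> ^^ m)"
proof (induction m)
  case (Suc m)
  have "(comp_op \<Psi> ^^ Suc m) f = comp_op \<Psi> ((comp_op \<Psi> ^^ m) f)" by simp
  also have "\<dots> = f \<circ> (\<Psi> ^^ m) \<circ> \<Psi>" by (simp only: Suc comp_op_def)
  also have "\<dots> = f \<circ> (\<Psi> ^^ Suc m)" by (simp only: funpow_Suc_right comp_assoc)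
  finally show ?case .
qed simp

lemma range_anti: "range ((\<Psi>::'a\<Rightarrow>'a) ^^ Suc m) \<subseteq> range (\<Psi> ^^ m)"
proof -
  have "(\<Psi> ^^ Suc m) x = (\<Psi>^^m) (\<Psi> x)" for x by (simp only: funpow_Suc_right comp_def)
  then show ?thesis by auto
qed

lemma range_anti_le: "k \<le> j \<Longrightarrow> range (\<Psi> ^^ j) \<subseteq> range ((\<Psi>::'a\<Rightarrow>'a) ^^ k)"
  by (rule lift_Suc_antimono_le[of "\<lambda>m. range (\<Psi> ^^ m)"]) (rule range_anti)

theorem theorem3p10:
  fixes \<phi> w :: "real \<Rightarrow> real" and \<Psi> :: "nat \<Rightarrow> nat"
  assumes "young_function \<phi>" and "delta2 \<phi>" and "weight_function w"
    and "\<forall>f \<in> orlicz_lorentz_seq \<phi> w. comp_op \<Psi> f \<in> orlicz_lorentz_seq \<phi> w"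
  shows "ascent (orlicz_lorentz_seq \<phi> w) (comp_op \<Psi>) = \<infinity> \<longleftrightarrow>
    (\<exists>n :: nat \<Rightarrow> nat. inj_on n {1..} \<and>
       (\<forall>m\<ge>1. n m \<notin> range (\<Psi> ^^ m) \<and> n m \<in> range (\<Psi> ^^ (m - 1))))"
proof -
  let ?S = "orlicz_lorentz_seq \<phi> w"
  let ?K = "kernel_pow ?S (comp_op \<Psi>)"
  let ?R = "\<lambda>m. range (\<Psi> ^^ m)"
  have Kc: "?K m = {f \<in> ?S. \<forall>x\<in>?R m. f x = 0}" for m
    unfolding kernel_pow_def comp_pow by (auto simp: fun_eq_iff)
  have KR: "?K m = ?K (Suc m) \<longleftrightarrow> ?R m = ?R (Suc m)" for m
  proof
    assume eq: "?K m = ?K (Suc m)"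
    show "?R m = ?R (Suc m)"
    proof (rule ccontr)
      assume "?R m \<noteq> ?R (Suc m)"
      with range_anti[where \<Psi>=\<Psi> and m=m] obtain p where p: "p \<in> ?R m" "p \<notin> ?R (Suc m)" by blast
      let ?f = "(\<lambda>n. if n = p then (1::complex) else 0)"
      have fS: "?f \<in> ?S" using delta_in assms(1,3) by blast
      have z: "\<forall>x\<in>?R (Suc m). ?f x = 0"
      proof
        fix x assume "x \<in> ?R (Suc m)"
        then have "x \<noteq> p" using p(2) by blast
        then show "?f x = 0" by simp
      qed
      have "?f \<in> ?K (Suc m)" using fS z unfolding Kc by blast
      moreover have "?f \<notin> ?K m"
      proof
        assume "?f \<in> ?K m"
        then have "?f p = 0" using p(1) unfolding Kc by blast
        then show False by simp
      qed
      ultimately show False using eq by blast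
    qed
  qed (simp add: Kc)
  have L: "ascent ?S (comp_op \<Psi>) = \<infinity> \<longleftrightarrow> (\<forall>m. ?R m \<noteq> ?R (Suc m))"
    unfolding ascent_def KR by simp
  have Rr: "(\<forall>m. ?R m \<noteq> ?R (Suc m)) \<longleftrightarrow> (\<exists>n :: nat \<Rightarrow> nat. inj_on n {1..} \<and>
       (\<forall>m\<ge>1. n m \<notin> range (\<Psi> ^^ m) \<and> n m \<in> range (\<Psi> ^^ (m - 1))))"
  proof
    assume H: "\<forall>m. ?R m \<noteq> ?R (Suc m)"
    have ex: "\<exists>x. x \<in> ?R (m - 1) - ?R m" if "m \<ge> 1" for m
    proof -
      have "?R (m-1) \<noteq> ?R (Suc (m-1))" using H by blast
      moreover have "Suc (m-1) = m" using that by simp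
      ultimately show ?thesis using range_anti[where \<Psi>=\<Psi> and m="m-1"] by auto
    qed
    define n where "n m = (SOME x. x \<in> ?R (m - 1) - ?R m)" for m
    have nm: "n m \<in> ?R (m - 1) - ?R m" if "m \<ge> 1" for m
      unfolding n_def using someI_ex[OF ex[OF that]] .
    have "inj_on n {1..}"
    proof (rule inj_onI)
      fix a b assume a: "a \<in> {1..}" and b: "b \<in> {1..}" and e: "n a = n b"
      show "a = b"
      proof (rule ccontr)
        assume "a \<noteq> b"
        then consider "a < b" | "b < a" by linarith
        then show False
        proof cases
          case 1
          then have "?R (b - 1) \<subseteq> ?R a" by (intro range_anti_le) auto
          then show False using nm[of a] nm[of b] a b e by auto
        next
          case 2
          then have "?R (a - 1) \<subseteq> ?R b" by (intro range_anti_le) auto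
          then show False using nm[of a] nm[of b] a b e by auto
        qed
      qed
    qed
    then show "\<exists>n :: nat \<Rightarrow> nat. inj_on n {1..} \<and>
       (\<forall>m\<ge>1. n m \<notin> range (\<Psi> ^^ m) \<and> n m \<in> range (\<Psi> ^^ (m - 1)))"
      using nm by blast
  next
    assume "\<exists>n :: nat \<Rightarrow> nat. inj_on n {1..} \<and>
       (\<forall>m\<ge>1. n m \<notin> range (\<Psi> ^^ m) \<and> n m \<in> range (\<Psi> ^^ (m - 1)))"
    then obtain n :: "nat \<Rightarrow> nat" where n: "\<forall>m\<ge>1. n m \<notin> ?R m \<and> n m \<in> ?R (m - 1)" by blast
    show "\<forall>m. ?R m \<noteq> ?R (Suc m)"
    proof
      fix m
      have "n (Suc m) \<notin> ?R (Suc m)" "n (Suc m) \<in> ?R m" using n[rule_format, of "Suc m"] by auto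
      then show "?R m \<noteq> ?R (Suc m)" by blast
    qed
  qed
  show ?thesis using L Rr by simp
qed

end
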